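(* For every $n\ge 1$, $s(n)>0$ if and only if there exist an integer $j\ge 2$ and nonnegative integers $t_2,t_3,\dots,t_j$ with $t_j\ge 1$ such that $$p_n = 2^{t_2}3^{t_3}\cdots j^{t_j} + t_2+2t_3+\dots+(j-1)t_j+3 .$$ (That is: either $p_n=2^{t_2}+t_2+3$ for some $t_2\ge1$, or $p_n=2^{t_2}3^{t_3}+t_2+2t_3+3$ for some $t_2\ge0,t_3\ge1$, or $p_n=2^{t_2}3^{t_3}4^{t_4}+t_2+2t_3+3t_4+3$ for some $t_2,t_3\ge0,t_4\ge1$, and so on.)
   Context: $p_n$ denotes the $n$-th prime ($p_1=2$). For an integer $k\ge 3$, say that a positive integer $m$ is represented by $F_k$ if there exist integers $1\le x_1\le x_2\le\dots\le x_k$ with $x_1x_2\cdots x_k+x_1+\dots+x_k=m$. For $n\ge 1$, $s(n)$ is the smallest integer $k\ge 3$ such that $p_n+k-3$ is represented by $F_k$, and $s(n)=0$ if no such $k\ge 3$ exists. *)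

theory Defs
  imports "HOL-Computational_Algebra.Primes" "HOL-Library.Infinite_Set"
begin

text \<open>The n-th prime, 1-indexed: nth_prime 1 = 2.\<close>
definition nth_prime :: "nat \<Rightarrow> nat" where
  "nth_prime n = enumerate {p::nat. prime p} (n - 1)"

definition represented_by_F :: "nat \<Rightarrow> nat \<Rightarrow> bool" where
  "represented_by_F k m \<longleftrightarrow>
     (\<exists>xs::nat list. length xs = k \<and> sorted xs \<and> (\<forall>x\<in>set xs. 1 \<le> x) \<and>
        prod_list xs + sum_list xs = m)"

definition s :: "nat \<Rightarrow> nat" where
  "s n = (if \<exists>k\<ge>3. represented_by_F k (nth_prime n + k - 3)
          then (LEAST k. 3 \<le> k \<and> represented_by_F k (nth_prime n + k - 3))
          else 0)"

end

theory Submission imports Defs "HOL-Library.Multiset" begin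

lemma sum_mset_S:
  fixes f :: "nat \<Rightarrow> nat"
  assumes "finite S" "set_mset M \<subseteq> S"
  shows "sum_mset (image_mset f M) = (\<Sum>i\<in>S. count M i * f i)"
  using assms(2)
proof (induction M)
  case empty then show ?case by simp
next
  case (add x M)
  then have xS: "x \<in> S" and MS: "set_mset M \<subseteq> S" by auto
  have "(\<Sum>i\<in>S. count (add_mset x M) i * f i) = (\<Sum>i\<in>S. count M i * f i + (if i = x then f x else 0))"
    by (intro sum.cong) auto
  also have "\<dots> = (\<Sum>i\<in>S. count M i * f i) + f x"
    using xS assms(1) by (simp add: sum.distrib)
  finally show ?case using add.IH[OF MS] by simp
qed

lemma prod_mset_S:
  fixes S :: "nat set"
  assumes "finite S" "set_mset M \<subseteq> S"
  shows "prod_mset M = (\<Prod>i\<in>S. i ^ count M i)"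
  using assms(2)
proof (induction M)
  case empty then show ?case by simp
next
  case (add x M)
  then have xS: "x \<in> S" and MS: "set_mset M \<subseteq> S" by auto
  have "(\<Prod>i\<in>S. i ^ count (add_mset x M) i) = (\<Prod>i\<in>S. i ^ count M i * (if i = x then x else 1))"
    by (intro prod.cong) auto
  also have "\<dots> = (\<Prod>i\<in>S. i ^ count M i) * x"
    using xS assms(1) by (simp add: prod.distrib)
  finally show ?case using add.IH[OF MS] by simp
qed

lemma prime_nth: "prime (nth_prime n)"
  unfolding nth_prime_def using enumerate_in_set[OF primes_infinite] by blast

lemma sum_minus1:
  assumes "\<forall>y\<in>set_mset M. (2::nat) \<le> y"
  shows "sum_mset (image_mset (\<lambda>y. y - 1) M) + size M = sum_mset M"
  using assms by (induction M) auto

lemma main: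
  fixes p :: nat
  assumes "p \<noteq> 4"
  shows "(\<exists>k\<ge>3. represented_by_F k (p + k - 3)) \<longleftrightarrow>
    (\<exists>(j::nat) (t::nat \<Rightarrow> nat). j \<ge> 2 \<and> t j \<ge> 1 \<and>
       p = (\<Prod>i=2..j. i ^ t i) + (\<Sum>i=2..j. (i - 1) * t i) + 3)"
proof
  assume "\<exists>k\<ge>3. represented_by_F k (p + k - 3)"
  then obtain k xs where k: "k \<ge> 3" and len: "length xs = k" and ge1: "\<forall>x\<in>set xs. 1 \<le> x"
    and eq: "prod_list xs + sum_list xs = p + k - 3"
    unfolding represented_by_F_def by blast
  define M where "M = filter_mset (\<lambda>x. 2 \<le> x) (mset xs)"
  define A where "A = filter_mset (\<lambda>x. \<not> 2 \<le> x) (mset xs)"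
  have MA: "mset xs = M + A" unfolding M_def A_def by simp
  have A1: "\<forall>x\<in>#A. x = 1" using ge1 unfolding A_def by auto
  have A1': "prod_mset A = 1 \<and> sum_mset A = size A" using A1 by (induction A) auto
  have M2: "\<forall>y\<in>#M. 2 \<le> y" unfolding M_def by auto
  have pr: "prod_list xs = prod_mset M"
    by (metis A1' MA mult.right_neutral prod_mset.union prod_mset_prod_list)
  have sm: "sum_list xs = sum_mset M + size A"
    by (metis A1' MA sum_mset.union sum_mset_sum_list)
  have kk: "k = size M + size A" using len MA by (metis size_mset size_union)
  have sM: "sum_mset (image_mset (\<lambda>y. y - 1) M) + size M = sum_mset M" using sum_minus1[OF M2] .
  have peq: "p = prod_mset M + sum_mset (image_mset (\<lambda>y. y - 1) M) + 3"
    using eq pr sm kk sM k by linarith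
  have Mne: "M \<noteq> {#}" using peq assms by auto
  define j where "j = Max (set_mset M)"
  have jin: "j \<in># M" unfolding j_def using Mne by (simp add: Max_in)
  have sub: "set_mset M \<subseteq> {2..j}" using M2 unfolding j_def by auto
  have j2: "j \<ge> 2" using M2 jin by auto
  show "\<exists>(j::nat) (t::nat \<Rightarrow> nat). j \<ge> 2 \<and> t j \<ge> 1 \<and>
       p = (\<Prod>i=2..j. i ^ t i) + (\<Sum>i=2..j. (i - 1) * t i) + 3"
    apply (rule exI[of _ j], rule exI[of _ "count M"])
    using j2 jin peq prod_mset_S[OF _ sub] sum_mset_S[OF _ sub, of "\<lambda>y. y - 1"]
    by (simp add: mult.commute)
next
  assume "\<exists>(j::nat) (t::nat \<Rightarrow> nat). j \<ge> 2 \<and> t j \<ge> 1 \<and>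
       p = (\<Prod>i=2..j. i ^ t i) + (\<Sum>i=2..j. (i - 1) * t i) + 3"
  then obtain j t where j2: "j \<ge> 2" and peq: "p = (\<Prod>i=2..j. i ^ t i) + (\<Sum>i=2..j. (i - 1) * t i) + 3"
    by blast
  define M where "M = (\<Sum>i\<in>{2..j}. replicate_mset (t i) i)"
  have cnt: "i \<in> {2..j} \<Longrightarrow> count M i = t i" for i
    unfolding M_def by (simp add: count_sum)
  have sub: "set_mset M \<subseteq> {2..j}"
  proof
    fix x assume "x \<in># M"
    then have "count M x \<noteq> 0" by simp
    then have "(\<Sum>i\<in>{2..j}. count (replicate_mset (t i) i) x) \<noteq> 0"
      unfolding M_def count_sum by assumption
    then show "x \<in> {2..j}"
    proof (rule contrapos_np)
      assume nx: "x \<notin> {2..j}"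
      have "\<forall>i\<in>{2..j}. count (replicate_mset (t i) i) x = 0" using nx by auto
      then show "(\<Sum>i\<in>{2..j}. count (replicate_mset (t i) i) x) = 0" by simp
    qed
  qed
  have M2: "\<forall>y\<in>#M. 2 \<le> y" using sub by auto
  have pM: "prod_mset M = (\<Prod>i=2..j. i ^ t i)"
    using prod_mset_S[OF _ sub] cnt by (metis (no_types, lifting) finite_atLeastAtMost prod.cong)
  have sM1: "sum_mset (image_mset (\<lambda>y. y - 1) M) = (\<Sum>i=2..j. (i - 1) * t i)"
    using sum_mset_S[OF _ sub, of "\<lambda>y. y - 1"] cnt by (metis (no_types, lifting) finite_atLeastAtMost sum.cong mult.commute)
  have sM: "sum_mset (image_mset (\<lambda>y. y - 1) M) + size M = sum_mset M" using sum_minus1[OF M2] .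
  define xs where "xs = sorted_list_of_multiset (M + replicate_mset 3 1)"
  have mx: "mset xs = M + replicate_mset 3 1" unfolding xs_def by simp
  have "prod_list xs = prod_mset (mset xs)" by (simp add: prod_mset_prod_list)
  also have "\<dots> = prod_mset M" by (simp add: mx)
  finally have "prod_list xs = prod_mset M" .
  moreover have "sum_list xs = sum_mset (mset xs)" by (simp add: sum_mset_sum_list)
  moreover have "sum_mset (mset xs) = sum_mset M + 3" by (simp add: mx)
  ultimately have "prod_list xs = prod_mset M" "sum_list xs = sum_mset M + 3" by auto
  moreover have "length xs = size M + 3" using arg_cong[OF mx, of size] by simp
  moreover have "sorted xs" unfolding xs_def by simp
  moreover have "\<forall>x\<in>set xs. 1 \<le> x" using M2 unfolding xs_def by auto
  ultimately have "represented_by_F (size M + 3) (p + (size M + 3) - 3)"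
    unfolding represented_by_F_def using peq pM sM1 sM by (intro exI[of _ xs]) auto
  then show "\<exists>k\<ge>3. represented_by_F k (p + k - 3)" by (intro exI[of _ "size M + 3"]) auto
qed

theorem proposition5:
  fixes n :: nat
  assumes "n \<ge> 1"
  shows "s n > 0 \<longleftrightarrow>
    (\<exists>(j::nat) (t::nat \<Rightarrow> nat). j \<ge> 2 \<and> t j \<ge> 1 \<and>
       nth_prime n = (\<Prod>i=2..j. i ^ t i) + (\<Sum>i=2..j. (i - 1) * t i) + 3)"
proof -
  have np4: "\<not> prime (4::nat)"
  proof
    assume "prime (4::nat)"
    then have "prime (2*2::nat)" by simp
    from prime_product[OF this] show False by simp
  qed
  have ne4: "nth_prime n \<noteq> 4" using prime_nth[of n] np4 by metis
  have "s n > 0 \<longleftrightarrow> (\<exists>k\<ge>3. represented_by_F k (nth_prime n + k - 3))"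
  proof
    assume "s n > 0" then show "\<exists>k\<ge>3. represented_by_F k (nth_prime n + k - 3)"
      unfolding s_def by (auto split: if_splits)
  next
    assume h: "\<exists>k\<ge>3. represented_by_F k (nth_prime n + k - 3)"
    then have "3 \<le> (LEAST k. 3 \<le> k \<and> represented_by_F k (nth_prime n + k - 3))"
      by (metis (mono_tags, lifting) LeastI_ex)
    then show "s n > 0" using h unfolding s_def by auto
  qed
  then show ?thesis using main[OF ne4] by simp
qed
end
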